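(* Let $\theta>0$. For every $x\in\mathbb{R}$, the Hölder exponent of $f_\theta$ at $x$ is \[ H_{f_\theta}(x)=\begin{cases}0 & \text{if } x \text{ is rational},\\ \theta/\tau(x) & \text{if } x \text{ is irrational}.\end{cases} \]
   Context: For $\theta>0$, the generalized Thomae function $f_\theta:\mathbb{R}\to\mathbb{R}$ is defined by $f_\theta(0)=1$, $f_\theta(x)=q^{-\theta}$ if $x$ is rational written as $x=p/q$ with $p\in\mathbb{Z}$, $q\in\mathbb{N}$ and $\gcd(p,q)=1$, and $f_\theta(x)=0$ if $x$ is irrational. For a locally bounded $f:\mathbb{R}\to\mathbb{R}$, $x\in\mathbb{R}$ and $\alpha\ge0$, one writes $f\in\Lambda^\alpha(x)$ if there exist a constant $C>0$ and a polynomial $P$ of degree less than $\alpha$ such that $|f(x+h)-P(h)|\le C|h|^\alpha$ for all $h$ in a neighborhood of $0$. The Hölder exponent of $f$ at $x$ is $H_f(x)=\sup\{\alpha\ge0: f\in\Lambda^\alpha(x)\}$. The irrationality exponent $\tau(x)$ of an irrational number $x$ is the supremum of the real numbers $\tau$ for which the inequality $|x-p/q|<q^{-\tau}$ has infinitely many solutions in nonzero integers $p,q$; one has $\tau(x)\ge2$, and $\tau(x)$ may equal $+\infty$, in which case $\theta/\tau(x)$ is read as $0$. *)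

theory Defs
  imports "HOL-Analysis.Analysis" "HOL-Computational_Algebra.Polynomial" "HOL-Library.Extended_Real"
begin

definition rat_denom :: "real \<Rightarrow> int" where
  "rat_denom x = snd (quotient_of (THE r. of_rat r = x))"

definition thomae :: "real \<Rightarrow> real \<Rightarrow> real" where
  "thomae \<theta> x = (if x = 0 then 1
                  else if x \<in> \<rat> then (real_of_int (rat_denom x)) powr (- \<theta>)
                  else 0)"

(* |h|^alpha with the convention |h|^0 = 1 (also for h = 0) *)
definition habs_pow :: "real \<Rightarrow> real \<Rightarrow> real" where
  "habs_pow h \<alpha> = (if \<alpha> = 0 then 1 else \<bar>h\<bar> powr \<alpha>)"

(* f \<in> Lambda^alpha(x): polynomial P of degree < alpha (zero polynomial has degree -infinity) *)
definition holder_class :: "real \<Rightarrow> (real \<Rightarrow> real) \<Rightarrow> real \<Rightarrow> bool" where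
  "holder_class \<alpha> f x \<longleftrightarrow>
     (\<exists>C>0. \<exists>P :: real poly. (P = 0 \<or> real (degree P) < \<alpha>) \<and>
        (\<exists>\<epsilon>>0. \<forall>h. \<bar>h\<bar> < \<epsilon> \<longrightarrow> \<bar>f (x + h) - poly P h\<bar> \<le> C * habs_pow h \<alpha>))"

definition holder_exponent :: "(real \<Rightarrow> real) \<Rightarrow> real \<Rightarrow> ereal" where
  "holder_exponent f x = Sup (ereal ` {\<alpha>. \<alpha> \<ge> 0 \<and> holder_class \<alpha> f x})"

definition irrationality_exponent :: "real \<Rightarrow> ereal" where
  "irrationality_exponent x = Sup (ereal ` {\<tau>::real.
      infinite {(p::int, q::int). p \<noteq> 0 \<and> q \<noteq> 0 \<and>
                 \<bar>x - real_of_int p / real_of_int q\<bar> < \<bar>real_of_int q\<bar> powr (- \<tau>)}})"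

end

theory Submission
  imports Defs
begin


lemma rat_denom_props:
  assumes "y \<in> \<rat>"
  shows "rat_denom y > 0 \<and> (\<exists>a. y = of_int a / of_int (rat_denom y) \<and> coprime a (rat_denom y))"
proof -
  obtain r where r: "y = of_rat r" using assms Rats_cases by blast
  have th: "(THE r. (of_rat r :: real) = y) = r" using r by (auto simp: of_rat_eq_iff)
  obtain a b where ab: "quotient_of r = (a, b)" by (cases "quotient_of r") auto
  have rd: "rat_denom y = b" unfolding rat_denom_def th ab by simp
  have "r = of_int a / of_int b" using quotient_of_div[OF ab] .
  then have "y = of_int a / of_int b" using r by (simp add: of_rat_divide)
  then show ?thesis using rd quotient_of_denom_pos[OF ab] quotient_of_coprime[OF ab] by auto
qed

lemma rat_denom_le:
  assumes "q > 0"
  shows "rat_denom (of_int p / of_int q) \<le> q"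
proof -
  have "(of_int p / of_int q :: real) \<in> \<rat>" by simp
  from rat_denom_props[OF this] obtain a where b0: "rat_denom (of_int p / of_int q) > 0"
    and a: "(of_int p / of_int q :: real) = of_int a / of_int (rat_denom (of_int p / of_int q))"
    and cop: "coprime a (rat_denom (of_int p / of_int q))" by blast
  define b where "b = rat_denom (of_int p / of_int q)"
  have "real_of_int (p * b) = real_of_int (a * q)" using a assms b0 unfolding b_def[symmetric]
    by (simp add: field_simps)
  then have e: "p * b = a * q" by linarith
  then have "b dvd a * q" by (metis dvd_triv_right)
  then have "b dvd q" using cop unfolding b_def[symmetric] by (metis coprime_commute coprime_dvd_mult_right_iff)
  then show ?thesis using assms unfolding b_def by (simp add: zdvd_imp_le)
qed

definition Sset :: "real \<Rightarrow> real \<Rightarrow> (int \<times> int) set" where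
  "Sset x \<tau> = {(p::int, q::int). p \<noteq> 0 \<and> q \<noteq> 0 \<and>
                 \<bar>x - real_of_int p / real_of_int q\<bar> < \<bar>real_of_int q\<bar> powr (- \<tau>)}"

lemma irr_exp_eq: "irrationality_exponent x = Sup (ereal ` {\<tau>. infinite (Sset x \<tau>)})"
  unfolding irrationality_exponent_def Sset_def by simp

lemma Sset_mono: assumes "t1 \<le> t2" shows "Sset x t2 \<subseteq> Sset x t1"
proof
  fix pq assume "pq \<in> Sset x t2"
  then obtain p q where pq: "pq = (p,q)" "p \<noteq> 0" "q \<noteq> 0"
    "\<bar>x - real_of_int p / real_of_int q\<bar> < \<bar>real_of_int q\<bar> powr (- t2)"
    unfolding Sset_def by auto
  have "\<bar>real_of_int q\<bar> \<ge> 1" using pq(3) by linarith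
  then have "\<bar>real_of_int q\<bar> powr (- t2) \<le> \<bar>real_of_int q\<bar> powr (- t1)"
    using assms by (intro powr_mono) auto
  then show "pq \<in> Sset x t1" using pq unfolding Sset_def by auto
qed

lemma Sset_bounded_finite:
  assumes "\<tau> \<ge> 0"
  shows "finite (Sset x \<tau> \<inter> {(p,q). \<bar>real_of_int q\<bar> \<le> N})"
proof -
  define K where "K = \<lceil>N\<rceil>"
  define M where "M = \<lceil>N * (\<bar>x\<bar> + 1)\<rceil>"
  have "Sset x \<tau> \<inter> {(p,q). \<bar>real_of_int q\<bar> \<le> N} \<subseteq> {-M..M} \<times> {-K..K}"
  proof
    fix pq assume "pq \<in> Sset x \<tau> \<inter> {(p,q). \<bar>real_of_int q\<bar> \<le> N}"
    then obtain p q where pq: "pq = (p,q)" "p \<noteq> 0" "q \<noteq> 0"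
      "\<bar>x - real_of_int p / real_of_int q\<bar> < \<bar>real_of_int q\<bar> powr (- \<tau>)"
      "\<bar>real_of_int q\<bar> \<le> N"
      unfolding Sset_def by auto
    have q1: "\<bar>real_of_int q\<bar> \<ge> 1" using pq(3) by linarith
    then have "\<bar>real_of_int q\<bar> powr (- \<tau>) \<le> \<bar>real_of_int q\<bar> powr 0"
      using assms by (intro powr_mono) auto
    then have "\<bar>x - real_of_int p / real_of_int q\<bar> < 1" using pq(3,4) q1 by auto
    then have "\<bar>real_of_int p / real_of_int q\<bar> < \<bar>x\<bar> + 1" by linarith
    then have "\<bar>real_of_int p\<bar> < (\<bar>x\<bar> + 1) * \<bar>real_of_int q\<bar>"
      using q1 by (simp add: abs_divide divide_less_eq)
    also have "\<dots> \<le> (\<bar>x\<bar> + 1) * N" using pq(5) by (intro mult_left_mono) auto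
    finally have "\<bar>real_of_int p\<bar> \<le> N * (\<bar>x\<bar> + 1)" by (simp add: mult.commute)
    then have "\<bar>p\<bar> \<le> M" unfolding M_def by linarith
    moreover have "\<bar>q\<bar> \<le> K" using pq(5) unfolding K_def by linarith
    ultimately show "pq \<in> {-M..M} \<times> {-K..K}" using pq(1) by auto
  qed
  then show ?thesis by (rule finite_subset) auto
qed

lemma Sset_large_q:
  assumes "\<tau> \<ge> 0" "infinite (Sset x \<tau>)"
  shows "\<exists>p q. (p,q) \<in> Sset x \<tau> \<and> \<bar>real_of_int q\<bar> > N"
proof (rule ccontr)
  assume "\<not> ?thesis"
  then have "Sset x \<tau> \<subseteq> Sset x \<tau> \<inter> {(p,q). \<bar>real_of_int q\<bar> \<le> N}" by (auto simp: not_less)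
  then show False using Sset_bounded_finite[OF assms(1)] assms(2) finite_subset by blast
qed

lemma Sset_one_infinite:
  assumes "x \<notin> \<rat>"
  shows "infinite (Sset x 1)"
proof -
  have x0: "x \<noteq> 0" using assms by auto
  define N0 where "N0 = \<lceil>1 / \<bar>x\<bar>\<rceil> + 1"
  define g where "g = (\<lambda>n::nat. (\<lfloor>real_of_int (N0 + int n) * x\<rfloor>, N0 + int n))"
  have N0: "real_of_int N0 * \<bar>x\<bar> > 1" "N0 \<ge> 1"
  proof -
    have "real_of_int N0 > 1 / \<bar>x\<bar>" unfolding N0_def by linarith
    then show "real_of_int N0 * \<bar>x\<bar> > 1" using x0 by (simp add: field_simps)
    have "1 / \<bar>x\<bar> > 0" using x0 by simp
    then show "N0 \<ge> 1" unfolding N0_def by linarith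
  qed
  have "g ` UNIV \<subseteq> Sset x 1"
  proof
    fix y assume "y \<in> g ` UNIV"
    then obtain n where y: "y = g n" by auto
    define q where "q = N0 + int n"
    have q1: "q \<ge> 1" using N0 unfolding q_def by simp
    have qx: "real_of_int q * \<bar>x\<bar> > 1"
    proof -
      have "real_of_int q \<ge> real_of_int N0" unfolding q_def by simp
      then have "real_of_int q * \<bar>x\<bar> \<ge> real_of_int N0 * \<bar>x\<bar>" by (intro mult_right_mono) auto
      then show ?thesis using N0 by linarith
    qed
    define p where "p = \<lfloor>real_of_int q * x\<rfloor>"
    have p0: "p \<noteq> 0"
    proof (cases "x > 0")
      case True then have "real_of_int q * x > 1" using qx by simp
      then show ?thesis unfolding p_def by linarith
    next
      case False then have "real_of_int q * x < -1" using qx x0 by simp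
      then show ?thesis unfolding p_def by linarith
    qed
    have "0 \<le> real_of_int q * x - p" "real_of_int q * x - p < 1" unfolding p_def by linarith+
    then have "\<bar>real_of_int q * x - p\<bar> < 1" by simp
    moreover have "x - real_of_int p / real_of_int q = (real_of_int q * x - p) / real_of_int q"
      using q1 by (simp add: field_simps)
    moreover have "real_of_int q > 0" using q1 by simp
    ultimately have "\<bar>x - real_of_int p / real_of_int q\<bar> < 1 / real_of_int q"
      by (simp add: abs_divide divide_strict_right_mono)
    moreover have "\<bar>real_of_int q\<bar> powr (- 1) = 1 / real_of_int q" using q1
      by (simp add: powr_minus_divide)
    moreover have "y = (p, q)" unfolding y g_def p_def q_def by simp
    ultimately show "y \<in> Sset x 1" using p0 q1 unfolding Sset_def by simp
  qed
  moreover have "inj g" unfolding g_def inj_def by auto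
  then have "infinite (g ` UNIV)" using finite_imageD infinite_UNIV_nat by blast
  ultimately show ?thesis using finite_subset by blast
qed




lemma irr_between:
  fixes a b :: real assumes "a < b" shows "\<exists>y. a < y \<and> y < b \<and> y \<notin> \<rat>"
proof (rule ccontr)
  assume "\<not> ?thesis"
  then have "{a<..<b} \<subseteq> \<rat>" by auto
  then have "countable {a<..<b}" using countable_rat countable_subset by blast
  then show False using uncountable_open_interval assms by auto
qed

lemma thomae_nonneg: "\<theta> > 0 \<Longrightarrow> thomae \<theta> y \<ge> 0"
  unfolding thomae_def by auto

lemma thomae_le1: assumes "\<theta> > 0" shows "thomae \<theta> y \<le> 1"
proof -
  have "y \<in> \<rat> \<Longrightarrow> real_of_int (rat_denom y) powr (- \<theta>) \<le> 1"
  proof -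
    assume "y \<in> \<rat>"
    then have "rat_denom y \<ge> 1" using rat_denom_props by fastforce
    then have "real_of_int (rat_denom y) powr (- \<theta>) \<le> real_of_int (rat_denom y) powr 0"
      using assms by (intro powr_mono) auto
    then show ?thesis using \<open>rat_denom y \<ge> 1\<close> by simp
  qed
  then show ?thesis unfolding thomae_def by auto
qed

lemma thomae_irr: "y \<notin> \<rat> \<Longrightarrow> thomae \<theta> y = 0"
  unfolding thomae_def by auto

lemma thomae_frac_lower:
  assumes "\<theta> > 0" "p \<noteq> 0" "q \<noteq> 0"
  shows "thomae \<theta> (real_of_int p / real_of_int q) \<ge> \<bar>real_of_int q\<bar> powr (- \<theta>)"
proof -
  define y where "y = real_of_int p / real_of_int q"
  have y0: "y \<noteq> 0" using assms unfolding y_def by simp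
  have yq: "y \<in> \<rat>" unfolding y_def by simp
  have "y = real_of_int (sgn q * p) / real_of_int \<bar>q\<bar>" unfolding y_def using assms(3)
    by (cases "q > 0") (auto simp: field_simps)
  then have le: "rat_denom y \<le> \<bar>q\<bar>" using rat_denom_le[of "\<bar>q\<bar>" "sgn q * p"] assms(3) by simp
  have pos: "rat_denom y > 0" using rat_denom_props[OF yq] by blast
  have "\<bar>real_of_int q\<bar> powr (- \<theta>) \<le> real_of_int (rat_denom y) powr (- \<theta>)"
    using le pos assms(1) by (intro powr_mono2') auto
  then show ?thesis using y0 yq unfolding thomae_def y_def[symmetric] by simp
qed

lemma closure_bound:
  fixes P :: "real poly"
  assumes "\<alpha> > 0" "\<And>h. \<bar>h\<bar> < \<epsilon> \<Longrightarrow> x + h \<notin> \<rat> \<Longrightarrow> \<bar>poly P h\<bar> \<le> C * \<bar>h\<bar> powr \<alpha>"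
    "\<bar>h\<bar> < \<epsilon>"
  shows "\<bar>poly P h\<bar> \<le> C * \<bar>h\<bar> powr \<alpha>"
proof (cases "x + h \<in> \<rat>")
  case False then show ?thesis using assms by blast
next
  case True
  have "\<forall>n. \<exists>y. x + h < y \<and> y < x + h + inverse (real (Suc n)) \<and> y \<notin> \<rat>"
    by (intro allI irr_between) simp
  then obtain g where g: "\<And>n. x + h < g n" "\<And>n. g n < x + h + inverse (real (Suc n))" "\<And>n. g n \<notin> \<rat>"
    by metis
  define hn where "hn n = g n - x" for n
  have hn_lim: "hn \<longlonglongrightarrow> h"
  proof -
    have "(\<lambda>n. h + inverse (real (Suc n))) \<longlonglongrightarrow> h + 0"
      by (intro tendsto_intros LIMSEQ_inverse_real_of_nat)
    then have u: "(\<lambda>n. h + inverse (real (Suc n))) \<longlonglongrightarrow> h" by simp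
    have a: "\<forall>\<^sub>F n in sequentially. h \<le> hn n"
      proof (intro always_eventually allI)
      fix n show "h \<le> hn n" using g(1)[of n] unfolding hn_def by simp
    qed
    have b: "\<forall>\<^sub>F n in sequentially. hn n \<le> h + inverse (real (Suc n))"
      proof (intro always_eventually allI)
      fix n show "hn n \<le> h + inverse (real (Suc n))" using g(2)[of n] unfolding hn_def by simp
    qed
    show ?thesis by (rule real_tendsto_sandwich[OF a b tendsto_const u])
  qed
  have ev: "eventually (\<lambda>n. \<bar>hn n\<bar> < \<epsilon>) sequentially"
  proof -
    have "(\<lambda>n. \<bar>hn n\<bar>) \<longlonglongrightarrow> \<bar>h\<bar>" by (intro tendsto_intros hn_lim)
    then show ?thesis using assms(3) order_tendstoD(2) by blast
  qed
  have ev2: "eventually (\<lambda>n. \<bar>poly P (hn n)\<bar> \<le> C * \<bar>hn n\<bar> powr \<alpha>) sequentially"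
    using ev by eventually_elim (use assms(2) g(3) in \<open>auto simp: hn_def\<close>)
  have l1: "(\<lambda>n. \<bar>poly P (hn n)\<bar>) \<longlonglongrightarrow> \<bar>poly P h\<bar>"
    by (intro tendsto_intros isCont_tendsto_compose[OF poly_isCont hn_lim])
  have l2: "(\<lambda>n. C * \<bar>hn n\<bar> powr \<alpha>) \<longlonglongrightarrow> C * \<bar>h\<bar> powr \<alpha>"
  proof (cases "h = 0")
    case False
    show ?thesis by (intro tendsto_intros tendsto_powr hn_lim) (use False in auto)
  next
    case True
    have "(\<lambda>n. \<bar>hn n\<bar> powr \<alpha>) \<longlonglongrightarrow> 0"
      by (rule tendsto_zero_powrI) (use tendsto_rabs[OF hn_lim] True assms(1) in auto)
    then have "(\<lambda>n. C * \<bar>hn n\<bar> powr \<alpha>) \<longlonglongrightarrow> C * 0" by (intro tendsto_intros)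
    then show ?thesis using True by simp
  qed
  show ?thesis by (rule tendsto_le[OF trivial_limit_sequentially l2 l1 ev2])
qed




lemma holder_posE:
  assumes "\<alpha> > 0" "holder_class \<alpha> f x"
  shows "\<exists>C P \<epsilon>. C > 0 \<and> \<epsilon> > 0 \<and> (\<forall>h. \<bar>h\<bar> < \<epsilon> \<longrightarrow> \<bar>f (x + h) - poly P h\<bar> \<le> C * \<bar>h\<bar> powr \<alpha>)"
proof -
  from assms(2) obtain C P \<epsilon> where "C > 0" "\<epsilon> > 0"
    "\<forall>h. \<bar>h\<bar> < \<epsilon> \<longrightarrow> \<bar>f (x + h) - poly P h\<bar> \<le> C * habs_pow h \<alpha>"
    unfolding holder_class_def by blast
  then show ?thesis using assms(1) unfolding habs_pow_def by (intro exI[of _ C] exI[of _ P] exI[of _ \<epsilon>]) auto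
qed

lemma rat_case:
  assumes "\<theta> > 0" "x \<in> \<rat>"
  shows "holder_exponent (thomae \<theta>) x = 0"
proof -
  have c0: "holder_class 0 (thomae \<theta>) x"
    unfolding holder_class_def habs_pow_def
    by (rule exI[of _ 1], simp, rule exI[of _ 1])
       (use thomae_nonneg[OF assms(1)] thomae_le1[OF assms(1)] in auto)
  have cpos: "\<not> holder_class \<alpha> (thomae \<theta>) x" if a0: "\<alpha> > 0" for \<alpha>
  proof
    assume "holder_class \<alpha> (thomae \<theta>) x"
    then obtain C P \<epsilon> where e: "\<epsilon> > 0"
      and b: "\<And>h. \<bar>h\<bar> < \<epsilon> \<Longrightarrow> \<bar>thomae \<theta> (x + h) - poly P h\<bar> \<le> C * \<bar>h\<bar> powr \<alpha>"
      using holder_posE[OF a0 \<open>holder_class \<alpha> (thomae \<theta>) x\<close>] by blast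
    have "\<bar>poly P 0\<bar> \<le> C * \<bar>0\<bar> powr \<alpha>"
    proof (rule closure_bound[OF a0, of \<epsilon> x])
      fix h assume "\<bar>h\<bar> < \<epsilon>" "x + h \<notin> \<rat>"
      then show "\<bar>poly P h\<bar> \<le> C * \<bar>h\<bar> powr \<alpha>" using b[of h] thomae_irr by auto
    qed (use e in auto)
    then have p0: "poly P 0 = 0" by simp
    have "\<bar>thomae \<theta> x - poly P 0\<bar> \<le> 0" using b[of 0] e by simp
    then have "thomae \<theta> x = 0" using p0 by simp
    moreover have "thomae \<theta> x > 0"
    proof -
      have "rat_denom x > 0" using rat_denom_props[OF assms(2)] by blast
      then show ?thesis unfolding thomae_def using assms by auto
    qed
    ultimately show False by simp
  qed
  have "{\<alpha>. \<alpha> \<ge> 0 \<and> holder_class \<alpha> (thomae \<theta>) x} = {0}"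
    using c0 cpos by (auto simp: le_less)
  then show ?thesis unfolding holder_exponent_def by simp
qed

lemma upper_lemma:
  assumes "\<theta> > 0" "x \<notin> \<rat>" "\<alpha> > 0" "holder_class \<alpha> (thomae \<theta>) x" "\<tau> > 0" "\<tau> * \<alpha> > \<theta>"
  shows "finite (Sset x \<tau>)"
proof (rule ccontr)
  assume inf: "infinite (Sset x \<tau>)"
  obtain C P \<epsilon> where C: "C > 0" and e: "\<epsilon> > 0"
    and b: "\<And>h. \<bar>h\<bar> < \<epsilon> \<Longrightarrow> \<bar>thomae \<theta> (x + h) - poly P h\<bar> \<le> C * \<bar>h\<bar> powr \<alpha>"
    using holder_posE[OF assms(3,4)] by blast
  have pb: "\<bar>poly P h\<bar> \<le> C * \<bar>h\<bar> powr \<alpha>" if "\<bar>h\<bar> < \<epsilon>" for h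
  proof (rule closure_bound[OF assms(3), of \<epsilon> x])
    fix h assume "\<bar>h\<bar> < \<epsilon>" "x + h \<notin> \<rat>"
    then show "\<bar>poly P h\<bar> \<le> C * \<bar>h\<bar> powr \<alpha>" using b[of h] thomae_irr by auto
  qed (use that in auto)
  have tb: "thomae \<theta> (x + h) \<le> 2 * C * \<bar>h\<bar> powr \<alpha>" if "\<bar>h\<bar> < \<epsilon>" for h
    using b[OF that] pb[OF that] by linarith
  have l1: "((\<lambda>t::real. t powr (- \<tau>)) \<longlongrightarrow> 0) at_top"
    using assms(5) by (intro tendsto_neg_powr filterlim_ident) auto
  have l2: "filterlim (\<lambda>t::real. t powr (\<tau> * \<alpha> - \<theta>)) at_top at_top"
    using assms(6) by (intro real_powr_at_top) auto
  have "eventually (\<lambda>t::real. t powr (- \<tau>) < \<epsilon>) at_top"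
    using order_tendstoD(2)[OF l1 e] .
  moreover have "eventually (\<lambda>t::real. t powr (\<tau> * \<alpha> - \<theta>) > 2 * C) at_top"
    using l2 by (simp add: filterlim_at_top_dense)
  ultimately have "eventually (\<lambda>t::real. t powr (- \<tau>) < \<epsilon> \<and> t powr (\<tau> * \<alpha> - \<theta>) > 2 * C) at_top"
    by eventually_elim auto
  then obtain N where N: "\<And>t. t \<ge> N \<Longrightarrow> t powr (- \<tau>) < \<epsilon> \<and> t powr (\<tau> * \<alpha> - \<theta>) > 2 * C"
    unfolding eventually_at_top_linorder by blast
  obtain p q where pq: "(p,q) \<in> Sset x \<tau>" "\<bar>real_of_int q\<bar> > max N 1"
    using Sset_large_q[OF _ inf] assms(5) by (meson less_le)
  define Q where "Q = \<bar>real_of_int q\<bar>"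
  have Q1: "Q \<ge> 1" "Q \<ge> N" using pq(2) unfolding Q_def by auto
  have p0: "p \<noteq> 0" and q0: "q \<noteq> 0" and cl: "\<bar>x - real_of_int p / real_of_int q\<bar> < Q powr (- \<tau>)"
    using pq(1) unfolding Sset_def Q_def by auto
  define h where "h = real_of_int p / real_of_int q - x"
  have habs: "\<bar>h\<bar> < Q powr (- \<tau>)" using cl unfolding h_def by linarith
  have he: "\<bar>h\<bar> < \<epsilon>" using habs N[OF Q1(2)] by linarith
  have "Q powr (- \<theta>) \<le> thomae \<theta> (x + h)"
    using thomae_frac_lower[OF assms(1) p0 q0] unfolding h_def Q_def by simp
  also have "\<dots> \<le> 2 * C * \<bar>h\<bar> powr \<alpha>" using tb[OF he] .
  also have "\<dots> \<le> 2 * C * (Q powr (- \<tau>)) powr \<alpha>"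
    using habs assms(3) C by (intro mult_left_mono powr_mono2) auto
  also have "\<dots> = 2 * C * Q powr (- (\<tau> * \<alpha>))" by (simp add: powr_powr)
  finally have ineq: "Q powr (- \<theta>) \<le> 2 * C * Q powr (- (\<tau> * \<alpha>))" .
  have "Q powr (\<tau> * \<alpha> - \<theta>) * Q powr (- (\<tau> * \<alpha>)) = Q powr (- \<theta>)"
    using Q1 by (simp add: powr_add[symmetric])
  with ineq have "Q powr (\<tau> * \<alpha> - \<theta>) * Q powr (- (\<tau> * \<alpha>)) \<le> 2 * C * Q powr (- (\<tau> * \<alpha>))"
    by simp
  moreover have "Q powr (- (\<tau> * \<alpha>)) > 0" using Q1 by simp
  ultimately have "Q powr (\<tau> * \<alpha> - \<theta>) \<le> 2 * C" by simp
  then show False using N[OF Q1(2)] by simp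
qed

lemma lower_lemma:
  assumes "\<theta> > 0" "x \<notin> \<rat>" "\<alpha> > 0" "finite (Sset x (\<theta> / \<alpha>))"
  shows "holder_class \<alpha> (thomae \<theta>) x"
proof -
  define \<tau> where "\<tau> = \<theta> / \<alpha>"
  define S where "S = Sset x \<tau>"
  have fS: "finite S" using assms(4) unfolding S_def \<tau>_def .
  have x0: "x \<noteq> 0" using assms(2) by auto
  define E where "E = insert 1 (insert \<bar>x\<bar> ((\<lambda>(p,q). \<bar>x - real_of_int p / real_of_int q\<bar>) ` S))"
  define \<epsilon> where "\<epsilon> = Min E"
  have fE: "finite E" "E \<noteq> {}" unfolding E_def using fS by auto
  have Epos: "\<forall>e\<in>E. e > 0"
  proof -
    have "\<bar>x - real_of_int p / real_of_int q\<bar> > 0" for p q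
    proof -
      have "real_of_int p / real_of_int q \<in> \<rat>" by simp
      then have "x \<noteq> real_of_int p / real_of_int q" using assms(2) by auto
      then show ?thesis by simp
    qed
    then show ?thesis unfolding E_def using x0 by auto
  qed
  have e0: "\<epsilon> > 0" unfolding \<epsilon>_def using fE Epos by (simp add: Min_gr_iff)
  have eE: "\<epsilon> \<le> e" if "e \<in> E" for e unfolding \<epsilon>_def using fE that by simp
  have main: "\<bar>thomae \<theta> (x + h)\<bar> \<le> \<bar>h\<bar> powr \<alpha>" if h: "\<bar>h\<bar> < \<epsilon>" for h
  proof (cases "x + h \<in> \<rat>")
    case False then show ?thesis by (simp add: thomae_irr)
  next
    case True
    define y where "y = x + h"
    have yq: "y \<in> \<rat>" using True unfolding y_def .
    have "\<epsilon> \<le> \<bar>x\<bar>" using eE unfolding E_def by auto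
    then have y0: "y \<noteq> 0" using h unfolding y_def by auto
    define b where "b = rat_denom y"
    obtain a where b0: "b > 0" and ya: "y = real_of_int a / real_of_int b"
      using rat_denom_props[OF yq] unfolding b_def by blast
    have a0: "a \<noteq> 0" using y0 ya by auto
    have "\<not> (\<bar>x - real_of_int a / real_of_int b\<bar> < \<bar>real_of_int b\<bar> powr (- \<tau>))"
    proof
      assume "\<bar>x - real_of_int a / real_of_int b\<bar> < \<bar>real_of_int b\<bar> powr (- \<tau>)"
      then have "(a, b) \<in> S" unfolding S_def Sset_def using a0 b0 by auto
      then have "\<bar>x - real_of_int a / real_of_int b\<bar> \<in> E" unfolding E_def by force
      then have "\<epsilon> \<le> \<bar>x - real_of_int a / real_of_int b\<bar>" by (rule eE)
      also have "\<dots> = \<bar>h\<bar>" using ya unfolding y_def by (metis abs_minus_commute add_diff_cancel_left')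
      finally show False using h by simp
    qed
    then have hb: "real_of_int b powr (- \<tau>) \<le> \<bar>h\<bar>"
      using ya b0 unfolding y_def by (simp add: abs_minus_commute)
    have "thomae \<theta> y = real_of_int b powr (- \<theta>)" using y0 yq unfolding thomae_def b_def by simp
    also have "\<dots> = (real_of_int b powr (- \<tau>)) powr \<alpha>"
      using assms(3) unfolding \<tau>_def by (simp add: powr_powr)
    also have "\<dots> \<le> \<bar>h\<bar> powr \<alpha>" using hb assms(3) by (intro powr_mono2) auto
    finally show ?thesis using thomae_nonneg[OF assms(1)] unfolding y_def by simp
  qed
  show ?thesis unfolding holder_class_def habs_pow_def
    by (rule exI[of _ 1], simp, rule exI[of _ 0], simp, rule exI[of _ \<epsilon>])
       (use e0 main assms(3) in auto)
qed




lemma holder_zero: assumes "\<theta> > 0" shows "holder_class 0 (thomae \<theta>) x"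
  unfolding holder_class_def habs_pow_def
  by (rule exI[of _ 1], simp, rule exI[of _ 1])
     (use thomae_nonneg[OF assms(1)] thomae_le1[OF assms(1)] in auto)

lemma mid_real: "r < u \<Longrightarrow> r < (r + u) / 2 \<and> (r + u) / 2 < (u::real)" by (auto simp: field_simps)

theorem mainTheorem3:
  fixes \<theta> :: real and x :: real
  assumes "\<theta> > 0"
  shows "holder_exponent (thomae \<theta>) x =
           (if x \<in> \<rat> then 0 else ereal \<theta> / irrationality_exponent x)"
proof (cases "x \<in> \<rat>")
  case True then show ?thesis using rat_case[OF assms] by simp
next
  case False
  define A where "A = {\<tau>. infinite (Sset x \<tau>)}"
  define B where "B = {\<alpha>. \<alpha> \<ge> 0 \<and> holder_class \<alpha> (thomae \<theta>) x}"
  define T where "T = Sup (ereal ` A)"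
  define H where "H = Sup (ereal ` B)"
  have TT: "irrationality_exponent x = T" unfolding T_def A_def irr_exp_eq ..
  have HH: "holder_exponent (thomae \<theta>) x = H" unfolding H_def B_def holder_exponent_def ..
  have down: "\<tau>' \<in> A" if "\<tau> \<in> A" "\<tau>' \<le> \<tau>" for \<tau> \<tau>'
    using that Sset_mono[of \<tau>' \<tau> x] finite_subset unfolding A_def by blast
  have downT: "\<tau> \<in> A" if "ereal \<tau> < T" for \<tau>
  proof -
    from that obtain \<tau>0 where "\<tau>0 \<in> A" "ereal \<tau> < ereal \<tau>0" unfolding T_def less_Sup_iff by auto
    then show ?thesis using down by auto
  qed
  have upT: "\<tau> \<notin> A" if "ereal \<tau> > T" for \<tau>
    using that Sup_upper[of "ereal \<tau>" "ereal ` A"] unfolding T_def by force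
  have T1: "T \<ge> 1" unfolding T_def
    using Sup_upper[of "ereal 1" "ereal ` A"] Sset_one_infinite[OF False] unfolding A_def by (auto simp: one_ereal_def)
  have B0: "0 \<in> B" unfolding B_def using holder_zero[OF assms] by simp
  have H0: "H \<ge> 0" unfolding H_def using Sup_upper[of "ereal 0" "ereal ` B"] B0 by (simp add: zero_ereal_def)
  have U: "\<tau> \<notin> A" if "\<alpha> \<in> B" "\<alpha> > 0" "\<tau> > 0" "\<tau> * \<alpha> > \<theta>" for \<alpha> \<tau>
    using upper_lemma[OF assms False that(2) _ that(3,4)] that(1) unfolding A_def B_def by auto
  have L: "\<alpha> \<in> B" if "\<alpha> > 0" "\<theta> / \<alpha> \<notin> A" for \<alpha>
    using lower_lemma[OF assms False that(1)] that unfolding A_def B_def by auto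
  show ?thesis
  proof (cases T rule: ereal_cases)
    case (real t)
    have t1: "t \<ge> 1" using T1 real by simp
    have "H = ereal (\<theta> / t)"
    proof (rule antisym)
      show "H \<le> ereal (\<theta> / t)" unfolding H_def
      proof (rule Sup_least)
        fix y assume "y \<in> ereal ` B"
        then obtain \<alpha> where a: "\<alpha> \<in> B" "y = ereal \<alpha>" by auto
        show "y \<le> ereal (\<theta> / t)"
        proof (rule ccontr)
          assume "\<not> ?thesis"
          then have at: "\<alpha> > \<theta> / t" using a by simp
          then have ap: "\<alpha> > 0" using assms t1 by (smt (verit) divide_pos_pos)
          have "\<alpha> * t > \<theta>" using at t1 by (simp add: field_simps)
          then have lt: "\<theta> / \<alpha> < t" using ap by (simp add: field_simps)
          define \<tau> where "\<tau> = (\<theta> / \<alpha> + t) / 2"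
          have "\<theta> / \<alpha> > 0" using ap assms by simp
          have "\<tau> > \<theta> / \<alpha>" "\<tau> < t" using mid_real[OF lt] unfolding \<tau>_def by auto
          then have "\<tau> > 0" "\<tau> * \<alpha> > \<theta>" using \<open>\<theta> / \<alpha> > 0\<close> ap
            by (linarith, simp add: field_simps)
          then have "\<tau> \<notin> A" using U a ap by blast
          moreover have "\<tau> \<in> A" using downT \<open>\<tau> < t\<close> real by simp
          ultimately show False by simp
        qed
      qed
    next
      show "ereal (\<theta> / t) \<le> H"
      proof (rule ccontr)
        assume "\<not> ?thesis"
        then have Hl: "H < ereal (\<theta> / t)" by simp
        then obtain s where s: "H = ereal s" using H0 by (cases H) auto
        have s0: "s \<ge> 0" using H0 s by simp
        have st: "s < \<theta> / t" using Hl s by simp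
        define \<alpha> where "\<alpha> = (s + \<theta> / t) / 2"
        have ap: "\<alpha> > 0" "\<alpha> > s" "\<alpha> < \<theta> / t" using s0 mid_real[OF st] unfolding \<alpha>_def by auto
        then have "\<alpha> * t < \<theta>" using t1 by (simp add: field_simps)
        then have "\<theta> / \<alpha> > t" using ap by (simp add: field_simps)
        then have "\<theta> / \<alpha> \<notin> A" using upT real by simp
        then have "\<alpha> \<in> B" using L ap by blast
        then have "ereal \<alpha> \<le> H" unfolding H_def by (simp add: Sup_upper)
        then show False using s ap by simp
      qed
    qed
    then show ?thesis using False TT HH real t1 by simp
  next
    case PInf
    have "H = 0"
    proof (rule antisym)
      show "H \<le> 0" unfolding H_def
      proof (rule Sup_least)
        fix y assume "y \<in> ereal ` B"
        then obtain \<alpha> where a: "\<alpha> \<in> B" "y = ereal \<alpha>" by auto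
        show "y \<le> 0"
        proof (rule ccontr)
          assume "\<not> ?thesis"
          then have ap: "\<alpha> > 0" using a by simp
          define \<tau> where "\<tau> = \<theta> / \<alpha> + 1"
          have "\<theta> / \<alpha> > 0" using ap assms by simp
          then have "\<tau> > 0" "\<tau> * \<alpha> > \<theta>" using ap unfolding \<tau>_def by (auto simp: field_simps)
          then have "\<tau> \<notin> A" using U a ap by blast
          moreover have "\<tau> \<in> A" using downT PInf by simp
          ultimately show False by simp
        qed
      qed
    qed (use H0 in simp)
    then show ?thesis using False TT HH PInf by simp
  next
    case MInf then show ?thesis using T1 by simp
  qed
qed


end
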